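(* Let $q\in(0,1]$. Consider the parametric convex semi-infinite problem described in the context, let $((\bar c,\bar b),\bar x)\in\operatorname{gph}\mathcal{S}$, and assume that $P(\bar c,\bar b)$ satisfies the Slater condition. Suppose that $\mathcal{L}$ is not $q$-order calm at $((f(\bar x)+\langle\bar c,\bar x\rangle,\bar b),\bar x)\in\operatorname{gph}\mathcal{L}$. Then there exist sequences $(x^r)_{r\in\mathbb{N}}\subset\mathbb{R}^n$ converging to $\bar x$ and $(b^r)_{r\in\mathbb{N}}\subset\mathcal{C}(T,\mathbb{R})$ converging to $\bar b$ (in $\|\cdot\|_\infty$) such that $$x^r\in\mathcal{F}(b^r)\ \text{for all } r,\qquad \lim_{r\to+\infty}\frac{\|b^r-\bar b\|_\infty^q}{d(x^r,\mathcal{S}_{\bar c}(\bar b))}=0,$$ as well as a finite set $T_0\subset T$ with $T_0\subset T_{b^r}(x^r)$ for all $r$, numbers $\gamma_t>0$ and vectors $u_t\in\partial g_t(\bar x)$ ($t\in T_0$), and $u\in\partial f(\bar x)$, satisfying $$-(\bar c+u)=\sum_{t\in T_0}\gamma_t u_t.$$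
   Context: Setting: $T$ is a compact subset of a metric space $Z$ with $T\neq Z$; $f:\mathbb{R}^n\to\mathbb{R}$ and $g_t:\mathbb{R}^n\to\mathbb{R}$ ($t\in T$) are convex, with $(t,x)\mapsto g_t(x)$ continuous on $T\times\mathbb{R}^n$. $\mathcal{C}(T,\mathbb{R})$ is the space of continuous $b:T\to\mathbb{R}$, $t\mapsto b_t$, with $\|b\|_\infty=\max_t|b_t|$. For $(c,b)\in\mathbb{R}^n\times\mathcal{C}(T,\mathbb{R})$, $P(c,b)$: minimize $f(x)+\langle c,x\rangle$ subject to $g_t(x)\le b_t$, $t\in T$; $\mathcal{S}(c,b)$ is its optimal solution set, $\mathcal{S}_c(b):=\mathcal{S}(c,b)$, $\mathcal{F}(b)=\{x:g_t(x)\le b_t,\ t\in T\}$, $T_b(x)=\{t\in T:g_t(x)=b_t\}$. Slater condition: some $\hat x$ has $g_t(\hat x)<\bar b_t$ for all $t$. $\mathcal{L}(\alpha,b)=\{x: f(x)+\langle\bar c,x\rangle\le\alpha,\ g_t(x)\le b_t,\ t\in T\}$ on $\mathbb{R}\times\mathcal{C}(T,\mathbb{R})$ normed by $\max\{|\alpha|,\|b\|_\infty\}$. $\partial$ is the convex subdifferential; distances are Euclidean. A set-valued $S:Y\rightrightarrows X$ between metric spaces is $q$-order calm at $(\bar y,\bar x)\in\operatorname{gph}S$ if there exist $\tau>0$ and neighbourhoods $U$ of $\bar x$, $V$ of $\bar y$ with $\tau\,d(x,S(\bar y))\le d(y,\bar y)^q$ for all $y\in V$, $x\in S(y)\cap U$.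 *)

theory Defs
  imports "HOL-Analysis.Analysis"
begin

text \<open>Supremum-norm distance on C(T,R); for continuous functions on a compact nonempty T
  this is max over t in T of the absolute difference (the 0 only matters if T is empty).\<close>
definition supdist :: "'z set \<Rightarrow> ('z \<Rightarrow> real) \<Rightarrow> ('z \<Rightarrow> real) \<Rightarrow> real" where
  "supdist T b b' = Sup (insert 0 ((\<lambda>t. \<bar>b t - b' t\<bar>) ` T))"

definition subdiff :: "('a::real_inner \<Rightarrow> real) \<Rightarrow> 'a \<Rightarrow> 'a set" where
  "subdiff h x = {u. \<forall>y. h x + inner u (y - x) \<le> h y}"

definition feas :: "'z set \<Rightarrow> ('z \<Rightarrow> 'a \<Rightarrow> real) \<Rightarrow> ('z \<Rightarrow> real) \<Rightarrow> 'a set" where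
  "feas T g b = {x. \<forall>t\<in>T. g t x \<le> b t}"

definition solset :: "('a::real_inner \<Rightarrow> real) \<Rightarrow> 'z set \<Rightarrow> ('z \<Rightarrow> 'a \<Rightarrow> real)
    \<Rightarrow> 'a \<Rightarrow> ('z \<Rightarrow> real) \<Rightarrow> 'a set" where
  "solset f T g c b = {x \<in> feas T g b. \<forall>y\<in>feas T g b. f x + inner c x \<le> f y + inner c y}"

definition active :: "'z set \<Rightarrow> ('z \<Rightarrow> 'a \<Rightarrow> real) \<Rightarrow> ('z \<Rightarrow> real) \<Rightarrow> 'a \<Rightarrow> 'z set" where
  "active T g b x = {t\<in>T. g t x = b t}"

definition levelmap :: "('a::real_inner \<Rightarrow> real) \<Rightarrow> 'z set \<Rightarrow> ('z \<Rightarrow> 'a \<Rightarrow> real)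
    \<Rightarrow> 'a \<Rightarrow> real \<times> ('z \<Rightarrow> real) \<Rightarrow> 'a set" where
  "levelmap f T g c p = {x. f x + inner c x \<le> fst p \<and> x \<in> feas T g (snd p)}"

definition pdist :: "'z set \<Rightarrow> real \<times> ('z \<Rightarrow> real) \<Rightarrow> real \<times> ('z \<Rightarrow> real) \<Rightarrow> real" where
  "pdist T p p' = max \<bar>fst p - fst p'\<bar> (supdist T (snd p) (snd p'))"

definition q_calm :: "'y set \<Rightarrow> ('y \<Rightarrow> 'y \<Rightarrow> real) \<Rightarrow> ('y \<Rightarrow> 'x::metric_space set)
    \<Rightarrow> real \<Rightarrow> 'y \<Rightarrow> 'x \<Rightarrow> bool" where
  "q_calm Ydom dY S q ybar xbar \<longleftrightarrow>
     (\<exists>\<tau>>0. \<exists>U. open U \<and> xbar \<in> U \<and> (\<exists>\<delta>>0. \<forall>y\<in>Ydom. dY y ybar < \<delta> \<longrightarrow>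
        (\<forall>x \<in> S y \<inter> U. \<tau> * infdist x (S ybar) \<le> dY y ybar powr q)))"

end

theory Submission
  imports Defs
begin

lemma subgrad_exists:
  fixes h :: "'a::euclidean_space \<Rightarrow> real"
  assumes "convex_on UNIV h"
  shows "\<exists>u. u \<in> subdiff h x"
proof -
  define S where "S = {p :: 'a \<times> real. snd p > h (fst p)}"
  have cS: "convex S"
    unfolding convex_def S_def
  proof (clarsimp)
    fix a b :: 'a and ra rb :: real and u v :: real
    assume "h a < ra" "h b < rb" "0 \<le> u" "0 \<le> v" "u + v = 1"
    show "h (u *\<^sub>R a + v *\<^sub>R b) < u * ra + v * rb"
    proof (cases "u = 0")
      case True then show ?thesis using \<open>u + v = 1\<close> \<open>h b < rb\<close> by simp
    next
      case False
      then have "u > 0" using \<open>0 \<le> u\<close> by simp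
      have "h (u *\<^sub>R a + v *\<^sub>R b) \<le> u * h a + v * h b"
      proof -
        have u: "u = 1 - v" using \<open>u + v = 1\<close> by simp
        show ?thesis using convex_onD[OF assms, of v a b] \<open>0 \<le> u\<close> \<open>0 \<le> v\<close> u by simp
      qed
      also have "\<dots> < u * ra + v * rb"
        using \<open>h a < ra\<close> \<open>u > 0\<close> \<open>0 \<le> v\<close>
        by (smt (verit) mult_left_mono mult_strict_left_mono \<open>h b < rb\<close>)
      finally show ?thesis .
    qed
  qed
  have ne: "S \<noteq> {}" unfolding S_def by (metis (mono_tags) empty_iff mem_Collect_eq fst_conv snd_conv less_add_one)
  have dis: "S \<inter> {(x, h x)} = {}" unfolding S_def by auto
  obtain a b where a0: "a \<noteq> 0" and aS: "\<forall>p\<in>S. inner a p \<le> b" and aT: "\<forall>p\<in>{(x, h x)}. inner a p \<ge> b"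
    using separating_hyperplane_sets[OF cS convex_singleton ne _ dis] by blast
  obtain p \<beta> where ap: "a = (p, \<beta>)" by (cases a)
  have key: "inner p y + \<beta> * r \<le> inner p x + \<beta> * h x" if "r > h y" for y r
  proof -
    have "(y, r) \<in> S" using that S_def by simp
    then have "inner a (y, r) \<le> b" using aS by blast
    moreover have "b \<le> inner a (x, h x)" using aT by simp
    ultimately show ?thesis by (simp add: ap inner_Pair)
  qed
  have b1: "\<beta> \<le> 0"
  proof -
    have "inner p x + \<beta> * (h x + 1) \<le> inner p x + \<beta> * h x" using key[of x "h x + 1"] by simp
    then show ?thesis by (simp add: algebra_simps)
  qed
  have b2: "\<beta> \<noteq> 0"
  proof
    assume "\<beta> = 0"
    then have "p \<noteq> 0" using a0 ap by (auto simp: zero_prod_def)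
    have "inner p (x + p) \<le> inner p x" using key[of "x + p" "h (x+p) + 1"] \<open>\<beta> = 0\<close> by simp
    then have "inner p p \<le> 0" by (simp add: inner_add_right)
    then show False using \<open>p \<noteq> 0\<close> by (metis inner_gt_zero_iff not_le)
  qed
  have bneg: "\<beta> < 0" using b1 b2 by simp
  have key2: "inner p y + \<beta> * h y \<le> inner p x + \<beta> * h x" for y
  proof (rule ccontr)
    define D where "D = inner p y + \<beta> * h y - (inner p x + \<beta> * h x)"
    assume "\<not> ?thesis"
    then have "D > 0" unfolding D_def by simp
    have "inner p y + \<beta> * (h y + D / (-2*\<beta>)) \<le> inner p x + \<beta> * h x"
      using key[of y "h y + D / (-2*\<beta>)"] \<open>D > 0\<close> bneg by (simp add: field_simps)
    then have "D + \<beta> * (D / (-2*\<beta>)) \<le> 0" unfolding D_def by (simp add: algebra_simps)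
    then show False using \<open>D > 0\<close> bneg by (simp add: field_simps)
  qed
  show ?thesis
  proof (rule exI[of _ "(1 / (-\<beta>)) *\<^sub>R p"], unfold subdiff_def, clarify)
    fix y
    have "-\<beta> * h x + inner p (y - x) \<le> -\<beta> * h y" using key2[of y] by (simp add: inner_diff_right algebra_simps)
    then have "(-\<beta> * h x + inner p (y - x)) / (-\<beta>) \<le> (-\<beta> * h y) / (-\<beta>)"
      using bneg by (intro divide_right_mono) auto
    then show "h x + inner ((1 / - \<beta>) *\<^sub>R p) (y - x) \<le> h y" using bneg by (simp add: field_simps)
  qed
qed

lemma subgrad_bound:
  fixes h :: "'a::real_inner \<Rightarrow> real"
  assumes w: "w \<in> subdiff h y" and B: "\<forall>z\<in>cball y 1. \<bar>h z\<bar> \<le> B"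
  shows "norm w \<le> 2 * B"
proof (cases "w = 0")
  case True
  have "\<bar>h y\<bar> \<le> B" using B by simp
  then show ?thesis using True by simp
next
  case False
  define z where "z = y + (1 / norm w) *\<^sub>R w"
  have zc: "z \<in> cball y 1" using False by (simp add: z_def dist_norm)
  have "h y + inner w (z - y) \<le> h z" using w unfolding subdiff_def by blast
  moreover have "inner w (z - y) = norm w"
  proof -
    have ww: "inner w w = norm w * norm w" by (metis power2_eq_square power2_norm_eq_inner)
    have "inner w (z - y) = (1 / norm w) * inner w w" by (simp add: z_def)
    then show ?thesis using False ww by simp
  qed
  moreover have "\<bar>h y\<bar> \<le> B" "\<bar>h z\<bar> \<le> B" using B zc by auto
  ultimately show ?thesis by linarith
qed

lemma cont_bound:
  fixes G :: "'i::metric_space \<Rightarrow> 'a::euclidean_space \<Rightarrow> real"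
  assumes I: "compact I" and Gc: "continuous_on (I \<times> UNIV) (\<lambda>(i,x). G i x)"
  shows "\<exists>B. \<forall>i\<in>I. \<forall>z\<in>cball x0 R. \<bar>G i z\<bar> \<le> B"
proof -
  have "compact (I \<times> cball x0 R)" using I by (simp add: compact_Times)
  moreover have "continuous_on (I \<times> cball x0 R) (\<lambda>(i,x). G i x)"
    by (rule continuous_on_subset[OF Gc]) auto
  ultimately have "compact ((\<lambda>(i,x). G i x) ` (I \<times> cball x0 R))"
    by (rule compact_continuous_image[rotated])
  then have "bounded ((\<lambda>(i,x). G i x) ` (I \<times> cball x0 R))" by (rule compact_imp_bounded)
  then obtain B where "\<forall>v\<in>(\<lambda>(i,x). G i x) ` (I \<times> cball x0 R). \<bar>v\<bar> \<le> B"
    unfolding bounded_real by blast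
  then have Bv: "\<And>v. v \<in> (\<lambda>(i,x). G i x) ` (I \<times> cball x0 R) \<Longrightarrow> \<bar>v\<bar> \<le> B" by blast
  show ?thesis
  proof (intro exI[of _ B] ballI)
    fix i z assume iz: "i \<in> I" "z \<in> cball x0 R"
    have "G i z = (\<lambda>(i,x). G i x) (i, z)" by simp
    also have "\<dots> \<in> (\<lambda>(i,x). G i x) ` (I \<times> cball x0 R)" using iz by (intro imageI) simp
    finally show "\<bar>G i z\<bar> \<le> B" using Bv by blast
  qed
qed

lemma cont_compose_pair:
  fixes G :: "'i::metric_space \<Rightarrow> 'a::euclidean_space \<Rightarrow> real"
  assumes Gc: "continuous_on (I \<times> UNIV) (\<lambda>(i,x). G i x)"
    and i: "\<forall>k. i k \<in> I" and il: "i \<longlonglongrightarrow> i0" and i0: "i0 \<in> I" and y: "y \<longlonglongrightarrow> y0"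
  shows "(\<lambda>k. G (i k) (y k)) \<longlonglongrightarrow> G i0 y0"
proof -
  have "((\<lambda>k. (\<lambda>(i,x). G i x) (i k, y k)) \<longlongrightarrow> (\<lambda>(i,x). G i x) (i0, y0)) sequentially"
    by (rule continuous_on_tendsto_compose[OF Gc]) (use i il i0 y in \<open>auto intro: tendsto_Pair\<close>)
  then show ?thesis by simp
qed

lemma subdiff_limit:
  fixes G :: "'i::metric_space \<Rightarrow> 'a::euclidean_space \<Rightarrow> real"
  assumes I: "compact I" and Gc: "continuous_on (I \<times> UNIV) (\<lambda>(i,x). G i x)"
    and i: "\<forall>k. i k \<in> I" and y: "y \<longlonglongrightarrow> x0" and wb: "\<forall>k. norm (w k) \<le> L"
    and ws: "\<forall>k. w k \<in> subdiff (G (i k)) (y k)"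
  shows "\<exists>i0\<in>I. \<exists>w0 r. strict_mono r \<and> (i \<circ> r) \<longlonglongrightarrow> i0 \<and> (w \<circ> r) \<longlonglongrightarrow> w0
            \<and> w0 \<in> subdiff (G i0) x0"
proof -
  have "compact (I \<times> cball (0::'a) L)" using I by (simp add: compact_Times)
  then have sc: "seq_compact (I \<times> cball (0::'a) L)" by (rule compact_imp_seq_compact)
  have mem: "\<forall>k. (\<lambda>k. (i k, w k)) k \<in> I \<times> cball 0 L" using i wb by (simp add: dist_norm)
  obtain l r where l: "l \<in> I \<times> cball 0 L" and r: "strict_mono r"
      and lim: "((\<lambda>k. (i k, w k)) \<circ> r) \<longlonglongrightarrow> l"
    by (rule seq_compactE[OF sc mem])
  obtain i0 w0 where l0: "l = (i0, w0)" by (cases l)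
  have i0: "i0 \<in> I" using l l0 by simp
  have "(\<lambda>k. fst (((\<lambda>k. (i k, w k)) \<circ> r) k)) \<longlonglongrightarrow> fst l" by (rule tendsto_fst[OF lim])
  then have il: "(i \<circ> r) \<longlonglongrightarrow> i0" using l0 by (simp add: comp_def)
  have "(\<lambda>k. snd (((\<lambda>k. (i k, w k)) \<circ> r) k)) \<longlonglongrightarrow> snd l" by (rule tendsto_snd[OF lim])
  then have wl: "(w \<circ> r) \<longlonglongrightarrow> w0" using l0 by (simp add: comp_def)
  have yl: "(y \<circ> r) \<longlonglongrightarrow> x0" using LIMSEQ_subseq_LIMSEQ[OF y r] .
  have wl': "(\<lambda>k. w (r k)) \<longlonglongrightarrow> w0" using wl by (simp add: comp_def)
  have yl': "(\<lambda>k. y (r k)) \<longlonglongrightarrow> x0" using yl by (simp add: comp_def)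
  have ir: "\<forall>k. (i \<circ> r) k \<in> I" using i by simp
  have "w0 \<in> subdiff (G i0) x0"
    unfolding subdiff_def
  proof (rule CollectI, rule allI)
    fix z
    have le: "\<And>k. G (i (r k)) (y (r k)) + inner (w (r k)) (z - y (r k)) \<le> G (i (r k)) z"
      using ws unfolding subdiff_def by blast
    have l1: "(\<lambda>k. G ((i \<circ> r) k) ((y \<circ> r) k)) \<longlonglongrightarrow> G i0 x0"
      by (rule cont_compose_pair[OF Gc ir il i0 yl])
    have l2: "(\<lambda>k. G ((i \<circ> r) k) z) \<longlonglongrightarrow> G i0 z"
      by (rule cont_compose_pair[OF Gc ir il i0 tendsto_const])
    have l3: "(\<lambda>k. inner (w (r k)) (z - y (r k))) \<longlonglongrightarrow> inner w0 (z - x0)"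
      by (rule tendsto_inner[OF wl' tendsto_diff[OF tendsto_const yl']])
    have l4: "(\<lambda>k. G ((i \<circ> r) k) ((y \<circ> r) k) + inner (w (r k)) (z - y (r k))) \<longlonglongrightarrow> G i0 x0 + inner w0 (z - x0)"
      by (rule tendsto_add[OF l1 l3])
    show "G i0 x0 + inner w0 (z - x0) \<le> G i0 z"
      by (rule LIMSEQ_le[OF l4 l2]) (use le in simp)
  qed
  then show ?thesis using i0 il wl r by blast
qed

lemma descent:
  fixes G :: "'i::metric_space \<Rightarrow> 'a::euclidean_space \<Rightarrow> real"
  assumes I: "compact I" and Gc: "continuous_on (I \<times> UNIV) (\<lambda>(i,x). G i x)"
    and Gconv: "\<forall>i\<in>I. convex_on UNIV (G i)"
    and Gle: "\<forall>i\<in>I. G i x0 \<le> 0"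
    and Gact: "\<forall>i\<in>I. G i x0 = 0 \<longrightarrow> (\<forall>w\<in>subdiff (G i) x0. inner w e < 0)"
  shows "\<exists>\<delta>>0. \<forall>s. 0 < s \<and> s < \<delta> \<longrightarrow> (\<forall>i\<in>I. G i (x0 + s *\<^sub>R e) < 0)"
proof (rule ccontr)
  assume H: "\<not> ?thesis"
  obtain B where B: "\<forall>i\<in>I. \<forall>z\<in>cball x0 2. \<bar>G i z\<bar> \<le> B" using cont_bound[OF I Gc] by blast
  define m where "m k = min (inverse (real (Suc k))) (inverse (norm e + 1))" for k
  have "\<forall>k. \<exists>s i. 0 < s \<and> s < m k \<and> i \<in> I \<and> G i (x0 + s *\<^sub>R e) \<ge> 0"
  proof
    fix k
    have "m k > 0" unfolding m_def by (simp add: add_pos_nonneg add_nonneg_pos)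
    then show "\<exists>s i. 0 < s \<and> s < m k \<and> i \<in> I \<and> G i (x0 + s *\<^sub>R e) \<ge> 0"
      using H by (meson not_less)
  qed
  then obtain s i where si: "\<And>k. 0 < s k \<and> s k < m k \<and> i k \<in> I \<and> G (i k) (x0 + s k *\<^sub>R e) \<ge> 0"
    by metis
  define y where "y k = x0 + s k *\<^sub>R e" for k
  have ycb: "dist x0 (y k) < 1" for k
  proof -
    have "dist x0 (y k) = s k * norm e" using si[of k] by (simp add: y_def dist_norm)
    also have "\<dots> \<le> inverse (norm e + 1) * norm e"
      using si[of k] by (intro mult_right_mono) (auto simp: m_def)
    also have "\<dots> < 1"
    proof -
      have p: "0 < norm e + 1" by (metis add_pos_nonneg norm_ge_zero zero_less_one add.commute)
      show ?thesis using p by (simp add: field_simps)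
    qed
    finally show ?thesis .
  qed
  have "\<forall>k. \<exists>w. w \<in> subdiff (G (i k)) (y k)" using subgrad_exists Gconv si by blast
  then obtain w where w: "\<And>k. w k \<in> subdiff (G (i k)) (y k)" by metis
  have wb: "norm (w k) \<le> 2 * B" for k
  proof (rule subgrad_bound[OF w])
    show "\<forall>z\<in>cball (y k) 1. \<bar>G (i k) z\<bar> \<le> B"
    proof
      fix z assume "z \<in> cball (y k) 1"
      then have "dist x0 z \<le> 2" using ycb[of k] dist_triangle[of x0 z "y k"] by (simp add: dist_commute)
      then show "\<bar>G (i k) z\<bar> \<le> B" using B si[of k] by simp
    qed
  qed
  have s0: "s \<longlonglongrightarrow> 0"
  proof (rule real_tendsto_sandwich[OF _ _ tendsto_const LIMSEQ_inverse_real_of_nat])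
    show "\<forall>\<^sub>F k in sequentially. 0 \<le> s k" using si by (simp add: less_imp_le)
    show "\<forall>\<^sub>F k in sequentially. s k \<le> inverse (real (Suc k))"
      using si by (simp add: m_def less_imp_le)
  qed
  have yl: "y \<longlonglongrightarrow> x0"
  proof -
    have "(\<lambda>k. x0 + s k *\<^sub>R e) \<longlonglongrightarrow> x0 + 0 *\<^sub>R e"
      by (intro tendsto_intros s0)
    then show ?thesis by (simp add: y_def[abs_def])
  qed
  have key: "- s k * inner (w k) e \<le> G (i k) x0" for k
  proof -
    have "G (i k) (y k) + inner (w k) (x0 - y k) \<le> G (i k) x0" using w[of k] unfolding subdiff_def by blast
    moreover have "inner (w k) (x0 - y k) = - s k * inner (w k) e" by (simp add: y_def)
    moreover have "G (i k) (y k) \<ge> 0" using si[of k] by (simp add: y_def)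
    ultimately show ?thesis by linarith
  qed
  have winn: "inner (w k) e \<ge> 0" for k
  proof -
    have "- s k * inner (w k) e \<le> 0" using key[of k] Gle si[of k] by fastforce
    then show ?thesis using si[of k] by (simp add: zero_le_mult_iff)
  qed
  have iI: "\<forall>k. i k \<in> I" using si by blast
  obtain i0 w0 r where i0: "i0 \<in> I" and r: "strict_mono r" and il: "(i \<circ> r) \<longlonglongrightarrow> i0"
      and wl: "(w \<circ> r) \<longlonglongrightarrow> w0" and w0: "w0 \<in> subdiff (G i0) x0"
    using subdiff_limit[OF I Gc iI yl, of w "2 * B"] wb w by blast
  have ir: "\<forall>k. (i \<circ> r) k \<in> I" using iI by simp
  have g1: "(\<lambda>k. G ((i \<circ> r) k) x0) \<longlonglongrightarrow> G i0 x0"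
    by (rule cont_compose_pair[OF Gc ir il i0 tendsto_const])
  have wl': "(\<lambda>k. w (r k)) \<longlonglongrightarrow> w0" using wl by (simp add: comp_def)
  have sl': "(\<lambda>k. s (r k)) \<longlonglongrightarrow> 0" using LIMSEQ_subseq_LIMSEQ[OF s0 r] by (simp add: comp_def)
  have g2: "(\<lambda>k. - s (r k) * inner (w (r k)) e) \<longlonglongrightarrow> - 0 * inner w0 e"
    by (intro tendsto_intros sl' wl')
  have "- 0 * inner w0 e \<le> G i0 x0"
    by (rule LIMSEQ_le[OF g2 g1]) (use key in simp)
  then have "G i0 x0 = 0" using Gle i0 by fastforce
  moreover have "inner w0 e \<ge> 0"
  proof (rule LIMSEQ_le_const)
    show "(\<lambda>k. inner (w (r k)) e) \<longlonglongrightarrow> inner w0 e" by (intro tendsto_intros wl')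
    show "\<exists>N. \<forall>n\<ge>N. 0 \<le> inner (w (r n)) e" using winn by blast
  qed
  ultimately show False using Gact i0 w0 by fastforce
qed

lemma g_slice_cont:
  assumes gc: "continuous_on (T \<times> UNIV) (\<lambda>(t,x). g t x)"
  shows "continuous_on T (\<lambda>t. g t x)"
proof -
  have "continuous_on T (\<lambda>t. (\<lambda>(t,x). g t x) (t, x))"
    by (rule continuous_on_compose2[OF gc]) (auto intro: continuous_intros)
  then show ?thesis by simp
qed

lemma subdiff_shift: "subdiff (\<lambda>x. h x - a) x = subdiff h x"
  unfolding subdiff_def by auto

lemma convex_subdiff: "convex (subdiff h x)"
proof (rule convexI)
  fix u v :: 'a and a b :: real
  assume u: "u \<in> subdiff h x" and v: "v \<in> subdiff h x" and ab: "0 \<le> a" "0 \<le> b" "a + b = 1"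
  show "a *\<^sub>R u + b *\<^sub>R v \<in> subdiff h x" unfolding subdiff_def
  proof (rule CollectI, rule allI)
    fix y
    have u1: "h x + inner u (y - x) \<le> h y" using u unfolding subdiff_def by blast
    have v1: "h x + inner v (y - x) \<le> h y" using v unfolding subdiff_def by blast
    have "a * (h x + inner u (y - x)) + b * (h x + inner v (y - x)) \<le> a * h y + b * h y"
      using u1 v1 ab by (intro add_mono mult_left_mono) auto
    moreover have "a * h y + b * h y = h y" using ab by (metis distrib_right mult_1)
    moreover have "a * h x + b * h x = h x" using ab by (metis distrib_right mult_1)
    moreover have "inner (a *\<^sub>R u + b *\<^sub>R v) (y - x) = a * inner u (y - x) + b * inner v (y - x)"
      by (simp add: inner_add_left)
    ultimately show "h x + inner (a *\<^sub>R u + b *\<^sub>R v) (y - x) \<le> h y"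
      by (simp add: algebra_simps)
  qed
qed

lemma closed_subdiff: "closed (subdiff h x)"
proof -
  have "subdiff h x = (\<Inter>y. {u. inner (y - x) u \<le> h y - h x})"
    unfolding subdiff_def by (auto simp: inner_commute algebra_simps)
  then show ?thesis by (simp add: closed_INT closed_halfspace_le)
qed

lemma kkt_cone:
  fixes T :: "'z::metric_space set" and f :: "'a::euclidean_space \<Rightarrow> real"
    and g :: "'z \<Rightarrow> 'a \<Rightarrow> real" and c xbar :: 'a and bbar :: "'z \<Rightarrow> real"
  assumes T: "compact T" and fconv: "convex_on UNIV f" and gconv: "\<forall>t\<in>T. convex_on UNIV (g t)"
    and gc: "continuous_on (T \<times> UNIV) (\<lambda>(t,x). g t x)" and bc: "continuous_on T bbar"
    and sol: "xbar \<in> solset f T g c bbar" and slater: "\<exists>xh. \<forall>t\<in>T. g t xh < bbar t"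
  shows "\<exists>u\<in>subdiff f xbar. -(c+u) \<in> insert 0 (conic hull (convex hull
            {w. \<exists>t\<in>T. g t xbar = bbar t \<and> w \<in> subdiff (g t) xbar}))"
proof (rule ccontr)
  define W where "W = {w. \<exists>t\<in>T. g t xbar = bbar t \<and> w \<in> subdiff (g t) xbar}"
  define K where "K = insert 0 (conic hull (convex hull W))"
  define Sf where "Sf = subdiff f xbar"
  assume H: "\<not> (\<exists>u\<in>subdiff f xbar. -(c+u) \<in> insert 0 (conic hull (convex hull
            {w. \<exists>t\<in>T. g t xbar = bbar t \<and> w \<in> subdiff (g t) xbar})))"
  then have H': "\<forall>u\<in>Sf. -(c+u) \<notin> K" unfolding K_def W_def Sf_def by blast
  obtain xh where xh: "\<forall>t\<in>T. g t xh < bbar t" using slater by blast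
  have feas: "xbar \<in> feas T g bbar" and opt: "\<forall>y\<in>feas T g bbar. f xbar + inner c xbar \<le> f y + inner c y"
    using sol unfolding solset_def by auto
  have gle: "\<forall>t\<in>T. g t xbar \<le> bbar t" using feas unfolding feas_def by blast
  have "\<exists>\<epsilon>>0. \<forall>t\<in>T. g t xh - bbar t \<le> -\<epsilon>"
  proof (cases "T = {}")
    case True then show ?thesis by (intro exI[of _ 1]) auto
  next
    case False
    have "continuous_on T (\<lambda>t. g t xh - bbar t)"
      by (intro continuous_intros g_slice_cont[OF gc] bc)
    then obtain t0 where t0: "t0 \<in> T" and mx: "\<forall>t\<in>T. g t xh - bbar t \<le> g t0 xh - bbar t0"
      using continuous_attains_sup[OF T False] by blast
    show ?thesis using xh t0 mx by (intro exI[of _ "-(g t0 xh - bbar t0)"]) auto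
  qed
  then obtain \<epsilon> where \<epsilon>: "\<epsilon> > 0" "\<forall>t\<in>T. g t xh - bbar t \<le> -\<epsilon>" by blast
  have fc: "continuous_on UNIV f" using convex_on_continuous[OF open_UNIV fconv] .
  have fc2: "continuous_on ({0::real} \<times> UNIV) (\<lambda>(i::real,x). f x)"
  proof -
    have "continuous_on ({0::real} \<times> UNIV) (\<lambda>p. f (snd p))"
      by (rule continuous_on_compose2[OF fc continuous_on_snd]) auto
    moreover have "(\<lambda>(i::real,x). f x) = (\<lambda>p. f (snd p))" by auto
    ultimately show ?thesis by simp
  qed
  obtain Bf where Bf: "\<forall>i\<in>{0::real}. \<forall>z\<in>cball xbar 2. \<bar>f z\<bar> \<le> Bf"
    using cont_bound[of "{0::real}" "\<lambda>i. f", OF _ fc2, of xbar 2] by auto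
  obtain Bg where Bg: "\<forall>t\<in>T. \<forall>z\<in>cball xbar 2. \<bar>g t z\<bar> \<le> Bg"
    using cont_bound[OF T gc] by blast
  have Bf0: "Bf \<ge> 0" using Bf by (metis abs_ge_zero centre_in_cball order_trans singletonI zero_le_numeral)
  have Sfb: "\<forall>u\<in>Sf. norm u \<le> 2 * Bf"
  proof
    fix u assume "u \<in> Sf"
    then show "norm u \<le> 2 * Bf" unfolding Sf_def
      by (rule subgrad_bound) (use Bf in \<open>auto simp: dist_norm\<close>)
  qed
  have Wb: "\<forall>w\<in>W. norm w \<le> 2 * Bg"
  proof
    fix w assume "w \<in> W"
    then obtain t where t: "t \<in> T" "w \<in> subdiff (g t) xbar" unfolding W_def by blast
    show "norm w \<le> 2 * Bg"
      by (rule subgrad_bound[OF t(2)]) (use Bg t(1) in \<open>auto simp: dist_norm\<close>)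
  qed
  have Wc: "compact W"
  proof -
    have "seq_compact W" unfolding seq_compact_def
    proof (intro allI impI)
      fix ws :: "nat \<Rightarrow> 'a" assume ws: "\<forall>n. ws n \<in> W"
      then have "\<forall>n. \<exists>t. t \<in> T \<and> g t xbar = bbar t \<and> ws n \<in> subdiff (g t) xbar"
        unfolding W_def by blast
      then obtain ts where ts: "\<And>n. ts n \<in> T \<and> g (ts n) xbar = bbar (ts n) \<and> ws n \<in> subdiff (g (ts n)) xbar"
        by metis
      have tsI: "\<forall>k. ts k \<in> T" using ts by blast
      obtain t0 w0 r where t0: "t0 \<in> T" and r: "strict_mono r" and tl: "(ts \<circ> r) \<longlonglongrightarrow> t0"
          and wl: "(ws \<circ> r) \<longlonglongrightarrow> w0" and w0: "w0 \<in> subdiff (g t0) xbar"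
        using subdiff_limit[OF T gc tsI tendsto_const, of ws "2 * Bg"] ws Wb ts by blast
      have tr: "\<forall>k. (ts \<circ> r) k \<in> T" using tsI by simp
      have l1: "(\<lambda>k. g ((ts \<circ> r) k) xbar) \<longlonglongrightarrow> g t0 xbar"
        by (rule cont_compose_pair[OF gc tr tl t0 tendsto_const])
      have l2: "(\<lambda>k. bbar ((ts \<circ> r) k)) \<longlonglongrightarrow> bbar t0"
        by (rule continuous_on_tendsto_compose[OF bc tl t0]) (use tr in simp)
      have "(\<lambda>k. g ((ts \<circ> r) k) xbar) = (\<lambda>k. bbar ((ts \<circ> r) k))" using ts by simp
      then have "g t0 xbar = bbar t0" using l1 l2 LIMSEQ_unique by metis
      then have "w0 \<in> W" using t0 w0 unfolding W_def by blast
      then show "\<exists>l\<in>W. \<exists>r. strict_mono r \<and> (ws \<circ> r) \<longlonglongrightarrow> l" using r wl by blast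
    qed
    then show ?thesis by (simp add: seq_compact_eq_compact)
  qed
  have Wneg: "\<forall>w\<in>W. inner w (xh - xbar) \<le> -\<epsilon>"
  proof
    fix w assume "w \<in> W"
    then obtain t where t: "t \<in> T" "g t xbar = bbar t" "w \<in> subdiff (g t) xbar" unfolding W_def by blast
    have "g t xbar + inner w (xh - xbar) \<le> g t xh" using t(3) unfolding subdiff_def by blast
    then show "inner w (xh - xbar) \<le> -\<epsilon>" using \<epsilon>(2) t by fastforce
  qed
  have hullneg: "convex hull W \<subseteq> {v. inner (xh - xbar) v \<le> -\<epsilon>}"
  proof (rule hull_minimal)
    show "W \<subseteq> {v. inner (xh - xbar) v \<le> -\<epsilon>}" using Wneg by (auto simp: inner_commute)
    show "convex {v. inner (xh - xbar) v \<le> -\<epsilon>}" by (rule convex_halfspace_le)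
  qed
  have h0: "0 \<notin> convex hull W" using hullneg \<epsilon>(1) by auto
  have KWc: "closed (conic hull (convex hull W))"
    by (rule closed_conic_hull) (use h0 compact_convex_hull[OF Wc] in blast)
  have Kc: "closed K" unfolding K_def using KWc by simp
  have Kconv: "convex K"
  proof (cases "W = {}")
    case True then show ?thesis unfolding K_def by simp
  next
    case False
    then obtain w where "w \<in> W" by blast
    then have "w \<in> convex hull W" by (rule hull_inc)
    then have "0 \<in> conic hull (convex hull W)" unfolding conic_hull_explicit
      by (intro CollectI exI[of _ 0] exI[of _ w]) simp
    then have "K = conic hull (convex hull W)" unfolding K_def by blast
    then show ?thesis by (simp add: convex_conic_hull)
  qed
  obtain u0 where u0: "u0 \<in> Sf" using subgrad_exists[OF fconv] unfolding Sf_def by blast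
  have Sfc: "compact Sf"
  proof (subst compact_eq_bounded_closed, intro conjI)
    show "bounded Sf" using Sfb unfolding bounded_iff by blast
    show "closed Sf" unfolding Sf_def by (rule closed_subdiff)
  qed
  have Sfconv: "convex Sf" unfolding Sf_def by (rule convex_subdiff)
  define A where "A = (\<Union>x\<in>K. \<Union>y\<in>(+) c ` Sf. {x + y})"
  have Ac: "closed A" unfolding A_def
    by (rule closed_compact_sums[OF Kc compact_translation[OF Sfc]])
  have Aconv: "convex A" unfolding A_def
    by (rule convex_sums[OF Kconv convex_translation[OF Sfconv]])
  have A0: "0 \<notin> A"
  proof
    assume "0 \<in> A"
    then obtain k u where "k \<in> K" "u \<in> Sf" "0 = k + (c + u)" unfolding A_def by auto
    then have "-(c+u) \<in> K" by (metis add.commute add_eq_0_iff)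
    then show False using H' \<open>u \<in> Sf\<close> by blast
  qed
  obtain d b where d: "d \<noteq> 0" "0 < b" "\<forall>x\<in>A. inner d x > b"
    using separating_hyperplane_closed_0[OF Aconv Ac A0] by blast
  have C1: "\<forall>u\<in>Sf. inner d (c + u) > b"
  proof
    fix u assume "u \<in> Sf"
    then have "0 + (c + u) \<in> A" unfolding A_def K_def by blast
    then show "inner d (c + u) > b" using d(3) by fastforce
  qed
  have C2: "\<forall>w\<in>W. inner d w \<ge> 0"
  proof (rule ballI, rule ccontr)
    fix w assume w: "w \<in> W" and neg: "\<not> 0 \<le> inner d w"
    define s where "s = (inner d (c + u0) - b) / (- inner d w)"
    have s0: "s \<ge> 0" unfolding s_def using C1 u0 neg by (intro divide_nonneg_pos) auto
    have "w \<in> convex hull W" using w by (rule hull_inc)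
    then have "s *\<^sub>R w \<in> K" unfolding K_def conic_hull_explicit using s0 by blast
    then have "s *\<^sub>R w + (c + u0) \<in> A" unfolding A_def using u0 by blast
    then have "inner d (s *\<^sub>R w + (c + u0)) > b" using d(3) by blast
    moreover have "inner d (s *\<^sub>R w + (c + u0)) = b"
    proof -
      have nz: "inner d w \<noteq> 0" using neg by simp
      have e1: "inner d (s *\<^sub>R w + (c + u0)) = s * inner d w + inner d (c + u0)"
        by (simp add: inner_add_right)
      have e2: "s * inner d w = -(inner d (c + u0) - b)" unfolding s_def using nz by simp
      show ?thesis using e1 e2 by linarith
    qed
    ultimately show False by simp
  qed
  define N where "N = norm c + 2 * Bf + 1"
  define Mx where "Mx = norm (xh - xbar) + 1"
  have N0: "N > 0" unfolding N_def using Bf0 by (simp add: add_nonneg_pos)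
  have Mx0: "Mx > 0" unfolding Mx_def by (simp add: add_nonneg_pos)
  define \<theta> where "\<theta> = b / (2 * N * Mx)"
  have \<theta>0: "\<theta> > 0" unfolding \<theta>_def using d(2) N0 Mx0 by simp
  define e where "e = - d + \<theta> *\<^sub>R (xh - xbar)"
  have E1: "\<forall>u\<in>Sf. inner (c + u) e < 0"
  proof
    fix u assume u: "u \<in> Sf"
    have "inner (c + u) (xh - xbar) \<le> norm (c + u) * norm (xh - xbar)" by (rule norm_cauchy_schwarz)
    also have "\<dots> \<le> N * Mx"
    proof (rule mult_mono)
      show "norm (c + u) \<le> N" using norm_triangle_ineq[of c u] Sfb u unfolding N_def by fastforce
      show "norm (xh - xbar) \<le> Mx" unfolding Mx_def by simp
    qed (use N0 in auto)
    finally have i1: "inner (c + u) (xh - xbar) \<le> N * Mx" .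
    have "\<theta> * inner (c + u) (xh - xbar) \<le> \<theta> * (N * Mx)" using i1 \<theta>0 by (intro mult_left_mono) auto
    also have "\<theta> * (N * Mx) = b / 2" unfolding \<theta>_def using N0 Mx0 by (simp add: field_simps)
    finally have i2: "\<theta> * inner (c + u) (xh - xbar) \<le> b / 2" .
    have "inner (c + u) e = - inner d (c + u) + \<theta> * inner (c + u) (xh - xbar)"
      unfolding e_def inner_add_right inner_minus_right inner_scaleR_right inner_commute[of "c + u" d] by simp
    then show "inner (c + u) e < 0" using i2 C1 u d(2) by fastforce
  qed
  have E2: "\<forall>w\<in>W. inner w e < 0"
  proof
    fix w assume w: "w \<in> W"
    have "inner w e = - inner d w + \<theta> * inner w (xh - xbar)"
      unfolding e_def inner_add_right inner_minus_right inner_scaleR_right inner_commute[of w d] by simp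
    moreover have "\<theta> * inner w (xh - xbar) \<le> \<theta> * (-\<epsilon>)" using Wneg w \<theta>0 by (intro mult_left_mono) auto
    moreover have "\<theta> * (-\<epsilon>) < 0" using \<theta>0 \<epsilon>(1) by (simp add: mult_pos_pos)
    ultimately show "inner w e < 0" using C2 w by fastforce
  qed
  have Gc1: "continuous_on (T \<times> UNIV) (\<lambda>(t,x). g t x - bbar t)"
  proof -
    have "continuous_on (T \<times> UNIV) (\<lambda>p. (\<lambda>(t,x). g t x) p - bbar (fst p))"
      by (intro continuous_on_diff gc continuous_on_compose2[OF bc continuous_on_fst]) auto
    moreover have "(\<lambda>p. (\<lambda>(t,x). g t x) p - bbar (fst p)) = (\<lambda>(t,x). g t x - bbar t)" by auto
    ultimately show ?thesis by metis
  qed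
  have Gconv1: "\<forall>t\<in>T. convex_on UNIV (\<lambda>x. g t x - bbar t)"
    using gconv by (auto intro!: convex_on_diff simp: concave_on_const)
  have Gle1: "\<forall>t\<in>T. g t xbar - bbar t \<le> 0" using gle by simp
  have Gact1: "\<forall>t\<in>T. g t xbar - bbar t = 0 \<longrightarrow> (\<forall>w\<in>subdiff (\<lambda>x. g t x - bbar t) xbar. inner w e < 0)"
    using E2 unfolding subdiff_shift W_def by auto
  obtain \<delta>1 where \<delta>1: "\<delta>1 > 0" "\<forall>s. 0 < s \<and> s < \<delta>1 \<longrightarrow> (\<forall>t\<in>T. g t (xbar + s *\<^sub>R e) - bbar t < 0)"
    using descent[OF T Gc1 Gconv1 Gle1 Gact1] by blast
  define F where "F = (\<lambda>(i::real) x. f x + inner c x - (f xbar + inner c xbar))"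
  have Gc2: "continuous_on ({0::real} \<times> UNIV) (\<lambda>(i,x). F i x)"
  proof -
    have "continuous_on ({0::real} \<times> UNIV) (\<lambda>p. f (snd p) + inner c (snd p) - (f xbar + inner c xbar))"
      by (intro continuous_intros continuous_on_compose2[OF fc continuous_on_snd]) auto
    moreover have "(\<lambda>p. f (snd p) + inner c (snd p) - (f xbar + inner c xbar)) = (\<lambda>(i,x). F i x)"
      unfolding F_def by auto
    ultimately show ?thesis by metis
  qed
  have lin: "convex_on UNIV (\<lambda>x. inner c x)"
    unfolding convex_on_def by (simp add: inner_add_right)
  have Gconv2: "\<forall>i\<in>{0::real}. convex_on UNIV (F i)"
    unfolding F_def using fconv lin by (auto intro!: convex_on_diff convex_on_add simp: concave_on_const)
  have Gle2: "\<forall>i\<in>{0::real}. F i xbar \<le> 0" unfolding F_def by simp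
  have Gact2: "\<forall>i\<in>{0::real}. F i xbar = 0 \<longrightarrow> (\<forall>w\<in>subdiff (F i) xbar. inner w e < 0)"
  proof (intro ballI impI)
    fix i :: real and w assume w: "w \<in> subdiff (F i) xbar"
    have "w - c \<in> Sf" unfolding Sf_def subdiff_def
    proof (rule CollectI, rule allI)
      fix y
      have "F i xbar + inner w (y - xbar) \<le> F i y" using w unfolding subdiff_def by blast
      then show "f xbar + inner (w - c) (y - xbar) \<le> f y"
        unfolding F_def by (simp add: inner_diff_left inner_diff_right inner_commute algebra_simps)
    qed
    then have "inner (c + (w - c)) e < 0" using E1 by blast
    then show "inner w e < 0" by simp
  qed
  obtain \<delta>2 where \<delta>2: "\<delta>2 > 0" "\<forall>s. 0 < s \<and> s < \<delta>2 \<longrightarrow> (\<forall>i\<in>{0::real}. F i (xbar + s *\<^sub>R e) < 0)"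
    using descent[OF _ Gc2 Gconv2 Gle2 Gact2] by (metis compact_insert compact_empty)
  define s where "s = min \<delta>1 \<delta>2 / 2"
  have s: "0 < s" "s < \<delta>1" "s < \<delta>2" unfolding s_def using \<delta>1(1) \<delta>2(1) by auto
  define y where "y = xbar + s *\<^sub>R e"
  have "y \<in> feas T g bbar" unfolding feas_def y_def using \<delta>1(2) s by fastforce
  moreover have "F 0 y < 0" unfolding y_def using \<delta>2(2) s by blast
  ultimately show False using opt unfolding F_def by fastforce
qed

lemma grouping:
  fixes S :: "'a::real_inner set" and tw :: "'a \<Rightarrow> 'z" and m :: "'a \<Rightarrow> real"
    and h :: "'z \<Rightarrow> 'a \<Rightarrow> real"
  assumes S: "finite S" and m: "\<forall>w\<in>S. 0 < m w" and sub: "\<forall>w\<in>S. w \<in> subdiff (h (tw w)) x"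
  shows "\<exists>\<gamma> ut. (\<forall>t\<in>tw ` S. 0 < \<gamma> t \<and> ut t \<in> subdiff (h t) x)
           \<and> (\<Sum>t\<in>tw ` S. \<gamma> t *\<^sub>R ut t) = (\<Sum>w\<in>S. m w *\<^sub>R w)"
proof -
  define \<gamma> where "\<gamma> t = (\<Sum>w\<in>{w\<in>S. tw w = t}. m w)" for t
  define ut where "ut t = (1 / \<gamma> t) *\<^sub>R (\<Sum>w\<in>{w\<in>S. tw w = t}. m w *\<^sub>R w)" for t
  have gpos: "0 < \<gamma> t" if tS: "t \<in> tw ` S" for t
  proof -
    obtain w0 where "w0 \<in> S" "t = tw w0" using tS by blast
    then have ne: "{w\<in>S. tw w = t} \<noteq> {}" by blast
    show ?thesis unfolding \<gamma>_def using S ne m by (intro sum_pos) auto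
  qed
  have sd: "ut t \<in> subdiff (h t) x" if t: "t \<in> tw ` S" for t
    unfolding subdiff_def
  proof (rule CollectI, rule allI)
    fix y
    let ?F = "{w\<in>S. tw w = t}"
    have fin: "finite ?F" using S by simp
    have each: "m w * (h t x + inner w (y - x)) \<le> m w * h t y" if "w \<in> ?F" for w
    proof -
      have "h t x + inner w (y - x) \<le> h t y" using sub that unfolding subdiff_def by blast
      then show ?thesis using m that by (intro mult_left_mono) auto
    qed
    have "(\<Sum>w\<in>?F. m w * (h t x + inner w (y - x))) \<le> (\<Sum>w\<in>?F. m w * h t y)"
      by (rule sum_mono) (rule each)
    moreover have "(\<Sum>w\<in>?F. m w * h t y) = \<gamma> t * h t y"
      unfolding \<gamma>_def by (simp add: sum_distrib_right)
    moreover have "(\<Sum>w\<in>?F. m w * (h t x + inner w (y - x)))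
        = \<gamma> t * h t x + inner (\<Sum>w\<in>?F. m w *\<^sub>R w) (y - x)"
      unfolding \<gamma>_def by (simp add: distrib_left sum.distrib sum_distrib_right inner_sum_left)
    ultimately have ineq: "\<gamma> t * h t x + inner (\<Sum>w\<in>?F. m w *\<^sub>R w) (y - x) \<le> \<gamma> t * h t y" by simp
    have gp: "\<gamma> t > 0" using gpos t .
    have "inner (ut t) (y - x) = inner (\<Sum>w\<in>?F. m w *\<^sub>R w) (y - x) / \<gamma> t"
      unfolding ut_def by simp
    then have "\<gamma> t * (h t x + inner (ut t) (y - x)) = \<gamma> t * h t x + inner (\<Sum>w\<in>?F. m w *\<^sub>R w) (y - x)"
      using gp by (simp add: field_simps)
    then have "\<gamma> t * (h t x + inner (ut t) (y - x)) \<le> \<gamma> t * h t y" using ineq by simp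
    then show "h t x + inner (ut t) (y - x) \<le> h t y" using gp by simp
  qed
  have "(\<Sum>t\<in>tw ` S. \<gamma> t *\<^sub>R ut t) = (\<Sum>t\<in>tw ` S. (\<Sum>w\<in>{w\<in>S. tw w = t}. m w *\<^sub>R w))"
  proof (rule sum.cong[OF refl])
    fix t assume "t \<in> tw ` S"
    then have "\<gamma> t \<noteq> 0" using gpos by fastforce
    then show "\<gamma> t *\<^sub>R ut t = (\<Sum>w\<in>{w\<in>S. tw w = t}. m w *\<^sub>R w)" unfolding ut_def by simp
  qed
  also have "\<dots> = (\<Sum>w\<in>S. m w *\<^sub>R w)"
    by (rule sum.group[OF S]) (use S in auto)
  finally show ?thesis using gpos sd by blast
qed

lemma kkt:
  fixes T :: "'z::metric_space set" and f :: "'a::euclidean_space \<Rightarrow> real"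
    and g :: "'z \<Rightarrow> 'a \<Rightarrow> real" and c xbar :: 'a and bbar :: "'z \<Rightarrow> real"
  assumes T: "compact T" and fconv: "convex_on UNIV f" and gconv: "\<forall>t\<in>T. convex_on UNIV (g t)"
    and gc: "continuous_on (T \<times> UNIV) (\<lambda>(t,x). g t x)" and bc: "continuous_on T bbar"
    and sol: "xbar \<in> solset f T g c bbar" and slater: "\<exists>xh. \<forall>t\<in>T. g t xh < bbar t"
  shows "\<exists>T0 \<gamma> ut u. finite T0 \<and> T0 \<subseteq> T \<and>
           (\<forall>t\<in>T0. g t xbar = bbar t \<and> 0 < \<gamma> t \<and> ut t \<in> subdiff (g t) xbar) \<and>
           u \<in> subdiff f xbar \<and> -(c+u) = (\<Sum>t\<in>T0. \<gamma> t *\<^sub>R ut t)"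
proof -
  define W where "W = {w. \<exists>t\<in>T. g t xbar = bbar t \<and> w \<in> subdiff (g t) xbar}"
  obtain u where u: "u \<in> subdiff f xbar" and v: "-(c+u) \<in> insert 0 (conic hull (convex hull W))"
    using kkt_cone[OF T fconv gconv gc bc sol slater] unfolding W_def by blast
  show ?thesis
  proof (cases "-(c+u) = 0")
    case True
    then show ?thesis using u by (intro exI[of _ "{}"]) auto
  next
    case False
    then have "-(c+u) \<in> conic hull (convex hull W)" using v by blast
    then obtain s z where sz: "-(c+u) = s *\<^sub>R z" "0 \<le> s" "z \<in> convex hull W"
      unfolding conic_hull_explicit by blast
    have s0: "s > 0" using sz False by (cases "s = 0") auto
    obtain S \<mu> where S: "finite S" "S \<subseteq> W" "\<forall>x\<in>S. 0 \<le> \<mu> x" "sum \<mu> S = 1"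
        "(\<Sum>v\<in>S. \<mu> v *\<^sub>R v) = z"
      using sz(3) unfolding convex_hull_explicit by blast
    define S' where "S' = {w\<in>S. \<mu> w \<noteq> 0}"
    have S'f: "finite S'" using S(1) unfolding S'_def by simp
    have "(\<Sum>v\<in>S'. \<mu> v *\<^sub>R v) = (\<Sum>v\<in>S. \<mu> v *\<^sub>R v)"
      unfolding S'_def using S(1) by (intro sum.mono_neutral_left) auto
    then have zS': "z = (\<Sum>v\<in>S'. \<mu> v *\<^sub>R v)" using S(5) by simp
    define m where "m w = s * \<mu> w" for w
    have mpos: "\<forall>w\<in>S'. 0 < m w" unfolding m_def S'_def using S(3) s0
      by (auto intro!: mult_pos_pos simp: less_le)
    have eq: "-(c+u) = (\<Sum>w\<in>S'. m w *\<^sub>R w)"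
      unfolding sz(1) zS' m_def by (simp add: scaleR_sum_right)
    define tw where "tw w = (SOME t. t \<in> T \<and> g t xbar = bbar t \<and> w \<in> subdiff (g t) xbar)" for w
    have tw: "tw w \<in> T \<and> g (tw w) xbar = bbar (tw w) \<and> w \<in> subdiff (g (tw w)) xbar" if "w \<in> S'" for w
    proof -
      have "w \<in> W" using that S(2) unfolding S'_def by blast
      then have "\<exists>t. t \<in> T \<and> g t xbar = bbar t \<and> w \<in> subdiff (g t) xbar" unfolding W_def by blast
      then show ?thesis unfolding tw_def by (rule someI_ex)
    qed
    obtain \<gamma> ut where gu: "\<forall>t\<in>tw ` S'. 0 < \<gamma> t \<and> ut t \<in> subdiff (g t) xbar"
        and sm: "(\<Sum>t\<in>tw ` S'. \<gamma> t *\<^sub>R ut t) = (\<Sum>w\<in>S'. m w *\<^sub>R w)"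
      using grouping[OF S'f mpos, of g tw xbar] tw by blast
    show ?thesis
    proof (intro exI conjI)
      show "finite (tw ` S')" using S'f by simp
      show "tw ` S' \<subseteq> T" using tw by blast
      show "\<forall>t\<in>tw ` S'. g t xbar = bbar t \<and> 0 < \<gamma> t \<and> ut t \<in> subdiff (g t) xbar" using tw gu by blast
      show "u \<in> subdiff f xbar" by (rule u)
      show "-(c+u) = (\<Sum>t\<in>tw ` S'. \<gamma> t *\<^sub>R ut t)" using eq sm by simp
    qed
  qed
qed

lemma supdist_bdd:
  fixes b b' :: "'a::topological_space \<Rightarrow> real"
  assumes T: "compact T" and b: "continuous_on T b" and b': "continuous_on T b'"
  shows "bdd_above (insert 0 ((\<lambda>t. \<bar>b t - b' t\<bar>) ` T))"
proof -
  have "continuous_on T (\<lambda>t. \<bar>b t - b' t\<bar>)" using continuous_on_rabs[OF continuous_on_diff[OF b b']] by simp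
  then have "compact ((\<lambda>t. \<bar>b t - b' t\<bar>) ` T)" using T by (rule compact_continuous_image)
  then have "bounded ((\<lambda>t. \<bar>b t - b' t\<bar>) ` T)" by (rule compact_imp_bounded)
  then show ?thesis by (simp add: bounded_imp_bdd_above)
qed

lemma supdist_ge:
  assumes T: "compact T" and b: "continuous_on T b" and b': "continuous_on T b'" and t: "t \<in> T"
  shows "\<bar>b t - b' t\<bar> \<le> supdist T b b'"
  unfolding supdist_def by (rule cSup_upper[OF _ supdist_bdd[OF T b b']]) (use t in auto)

lemma supdist_nonneg:
  assumes T: "compact T" and b: "continuous_on T b" and b': "continuous_on T b'"
  shows "0 \<le> supdist T b b'"
  unfolding supdist_def by (rule cSup_upper[OF _ supdist_bdd[OF T b b']]) auto

lemma supdist_le: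
  assumes "\<forall>t\<in>T. \<bar>b t - b' t\<bar> \<le> M" and "0 \<le> M"
  shows "supdist T b b' \<le> M"
  unfolding supdist_def by (rule cSup_least) (use assms in auto)

lemma lag_alg:
  fixes \<gamma> D :: "'z \<Rightarrow> real"
  assumes T0: "finite T0" and t: "t \<in> T0" and gp: "\<forall>s\<in>T0. 0 < \<gamma> s"
    and Dl: "\<forall>s\<in>T0. - \<rho> \<le> D s" and S: "(\<Sum>s\<in>T0. \<gamma> s * D s) \<le> \<rho>" and r: "0 \<le> \<rho>"
  shows "D t \<le> (1 + sum \<gamma> T0) * (1 + (\<Sum>s\<in>T0. 1 / \<gamma> s)) * \<rho>"
proof -
  define \<Gamma> where "\<Gamma> = sum \<gamma> T0"
  define Ig where "Ig = (\<Sum>s\<in>T0. 1 / \<gamma> s)"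
  have split: "(\<Sum>s\<in>T0. \<gamma> s * D s) = \<gamma> t * D t + (\<Sum>s\<in>T0 - {t}. \<gamma> s * D s)"
    using sum.remove[OF T0 t] by simp
  have "(\<Sum>s\<in>T0 - {t}. \<gamma> s * (- \<rho>)) \<le> (\<Sum>s\<in>T0 - {t}. \<gamma> s * D s)"
    using gp Dl by (intro sum_mono mult_left_mono) auto
  moreover have "(\<Sum>s\<in>T0 - {t}. \<gamma> s * (- \<rho>)) = - \<rho> * (\<Sum>s\<in>T0 - {t}. \<gamma> s)"
    by (simp add: sum_distrib_left sum_negf mult.commute)
  moreover have c: "(\<Sum>s\<in>T0 - {t}. \<gamma> s) \<le> \<Gamma>"
    unfolding \<Gamma>_def using T0 gp by (intro sum_mono2) auto
  moreover have "\<rho> * (\<Sum>s\<in>T0 - {t}. \<gamma> s) \<le> \<rho> * \<Gamma>" using c r by (rule mult_left_mono)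
  ultimately have "- \<rho> * \<Gamma> \<le> (\<Sum>s\<in>T0 - {t}. \<gamma> s * D s)"
    by linarith
  then have g1: "\<gamma> t * D t \<le> \<rho> * (1 + \<Gamma>)" using split S by (simp add: algebra_simps)
  have gt: "\<gamma> t > 0" using gp t by blast
  have G0: "0 \<le> \<Gamma>" unfolding \<Gamma>_def using gp by (intro sum_nonneg) (auto simp: less_imp_le)
  have "1 / \<gamma> t \<le> Ig" unfolding Ig_def
    using gp by (intro member_le_sum[OF t]) (auto simp: less_imp_le T0)
  then have ig: "1 / \<gamma> t \<le> 1 + Ig" by simp
  have "D t \<le> \<rho> * (1 + \<Gamma>) * (1 / \<gamma> t)" using g1 gt by (simp add: field_simps)
  also have "\<dots> \<le> \<rho> * (1 + \<Gamma>) * (1 + Ig)" using ig r G0 by (intro mult_left_mono) auto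
  finally show ?thesis unfolding \<Gamma>_def Ig_def by (simp add: algebra_simps)
qed

theorem proposition4p5:
  fixes T :: "'z::metric_space set"
    and f :: "'a::euclidean_space \<Rightarrow> real"
    and g :: "'z \<Rightarrow> 'a \<Rightarrow> real"
    and cbar xbar :: 'a
    and bbar :: "'z \<Rightarrow> real"
    and q :: real
  assumes T: "compact T" "T \<noteq> UNIV"
    and f_convex: "convex_on UNIV f"
    and g_convex: "\<forall>t\<in>T. convex_on UNIV (g t)"
    and g_cont: "continuous_on (T \<times> UNIV) (\<lambda>(t, x). g t x)"
    and q: "0 < q" "q \<le> 1"
    and bbar_cont: "continuous_on T bbar"
    and gph: "xbar \<in> solset f T g cbar bbar"
    and slater: "\<exists>xh. \<forall>t\<in>T. g t xh < bbar t"
    and not_calm: "\<not> q_calm {p. continuous_on T (snd p)} (pdist T) (levelmap f T g cbar) q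
                       (f xbar + inner cbar xbar, bbar) xbar"
  shows "\<exists>(xr :: nat \<Rightarrow> 'a) (br :: nat \<Rightarrow> 'z \<Rightarrow> real).
           (\<forall>r. continuous_on T (br r)) \<and>
           xr \<longlonglongrightarrow> xbar \<and>
           (\<lambda>r. supdist T (br r) bbar) \<longlonglongrightarrow> 0 \<and>
           (\<forall>r. xr r \<in> feas T g (br r)) \<and>
           (\<forall>r. 0 < infdist (xr r) (solset f T g cbar bbar)) \<and>
           (\<lambda>r. supdist T (br r) bbar powr q / infdist (xr r) (solset f T g cbar bbar))
              \<longlonglongrightarrow> 0 \<and>
           (\<exists>T0 (\<gamma> :: 'z \<Rightarrow> real) (ut :: 'z \<Rightarrow> 'a) u.
              finite T0 \<and> T0 \<subseteq> T \<and> (\<forall>r. T0 \<subseteq> active T g (br r) (xr r)) \<and>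
              (\<forall>t\<in>T0. 0 < \<gamma> t \<and> ut t \<in> subdiff (g t) xbar) \<and>
              u \<in> subdiff f xbar \<and>
              - (cbar + u) = (\<Sum>t\<in>T0. \<gamma> t *\<^sub>R ut t))"
proof -
  define abar where "abar = f xbar + inner cbar xbar"
  define ybar where "ybar = (abar, bbar)"
  define Sol where "Sol = solset f T g cbar bbar"
  have feasx: "xbar \<in> feas T g bbar" and opt: "\<forall>y\<in>feas T g bbar. abar \<le> f y + inner cbar y"
    using gph unfolding solset_def abar_def by auto
  have Leq: "levelmap f T g cbar ybar = Sol"
  proof (rule set_eqI, rule iffI)
    fix x assume "x \<in> levelmap f T g cbar ybar"
    then have x: "f x + inner cbar x \<le> abar" "x \<in> feas T g bbar"
      unfolding levelmap_def ybar_def by auto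
    show "x \<in> Sol" unfolding Sol_def solset_def using x opt by (auto intro: order_trans)
  next
    fix x assume "x \<in> Sol"
    then have x: "x \<in> feas T g bbar" "\<forall>y\<in>feas T g bbar. f x + inner cbar x \<le> f y + inner cbar y"
      unfolding Sol_def solset_def by auto
    then have "f x + inner cbar x \<le> abar" using feasx unfolding abar_def by blast
    then show "x \<in> levelmap f T g cbar ybar" unfolding levelmap_def ybar_def using x by simp
  qed
  define inv where "inv k = inverse (real (Suc k))" for k
  have inv0: "inv k > 0" for k unfolding inv_def by simp
  have ex: "\<exists>y x. continuous_on T (snd y) \<and> pdist T y ybar < inv k \<and> x \<in> levelmap f T g cbar y
              \<and> dist x xbar < inv k \<and> pdist T y ybar powr q < inv k * infdist x Sol" for k
  proof (rule ccontr)
    assume N: "\<not> ?thesis"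
    have "q_calm {p. continuous_on T (snd p)} (pdist T) (levelmap f T g cbar) q ybar xbar"
      unfolding q_calm_def
    proof (rule exI[of _ "inv k"], intro conjI, rule inv0, rule exI[of _ "ball xbar (inv k)"],
        intro conjI, simp, simp add: inv0, rule exI[of _ "inv k"], intro conjI, rule inv0, intro ballI impI)
      fix y x assume y: "y \<in> {p. continuous_on T (snd p)}" and yd: "pdist T y ybar < inv k"
        and x: "x \<in> levelmap f T g cbar y \<inter> ball xbar (inv k)"
      show "inv k * infdist x (levelmap f T g cbar ybar) \<le> pdist T y ybar powr q"
      proof -
        have "\<not> (continuous_on T (snd y) \<and> pdist T y ybar < inv k \<and> x \<in> levelmap f T g cbar y
              \<and> dist x xbar < inv k \<and> pdist T y ybar powr q < inv k * infdist x Sol)"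
          using N by blast
        then show ?thesis using y yd x unfolding Leq by (auto simp: not_less dist_commute)
      qed
    qed
    then show False using not_calm unfolding ybar_def abar_def by simp
  qed
  then obtain Y X where YX: "\<And>k. continuous_on T (snd (Y k)) \<and> pdist T (Y k) ybar < inv k
      \<and> X k \<in> levelmap f T g cbar (Y k) \<and> dist (X k) xbar < inv k
      \<and> pdist T (Y k) ybar powr q < inv k * infdist (X k) Sol"
    by metis
  define \<rho> where "\<rho> k = pdist T (Y k) ybar" for k
  define bk where "bk k = snd (Y k)" for k
  define ak where "ak k = fst (Y k)" for k
  have bkc: "continuous_on T (bk k)" for k using YX unfolding bk_def by blast
  have \<rho>b: "\<forall>t\<in>T. \<bar>bk k t - bbar t\<bar> \<le> \<rho> k" for k
  proof
    fix t assume t: "t \<in> T"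
    have "\<bar>bk k t - bbar t\<bar> \<le> supdist T (bk k) bbar" by (rule supdist_ge[OF T(1) bkc bbar_cont t])
    also have "\<dots> \<le> \<rho> k" unfolding \<rho>_def pdist_def bk_def ybar_def by simp
    finally show "\<bar>bk k t - bbar t\<bar> \<le> \<rho> k" .
  qed
  have \<rho>a: "\<bar>ak k - abar\<bar> \<le> \<rho> k" for k unfolding \<rho>_def pdist_def ak_def ybar_def by simp
  have \<rho>0: "0 \<le> \<rho> k" for k using \<rho>a[of k] by linarith
  have \<rho>i: "\<rho> k < inv k" for k using YX unfolding \<rho>_def by blast
  have Xl: "f (X k) + inner cbar (X k) \<le> ak k" and Xf: "\<forall>t\<in>T. g t (X k) \<le> bk k t" for k
    using YX[of k] unfolding levelmap_def feas_def ak_def bk_def by auto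
  have Xd: "dist (X k) xbar < inv k" for k using YX by blast
  have Xq: "\<rho> k powr q < inv k * infdist (X k) Sol" for k using YX unfolding \<rho>_def by blast
  obtain T0 \<gamma> ut u where kk: "finite T0" "T0 \<subseteq> T"
      "\<forall>t\<in>T0. g t xbar = bbar t \<and> 0 < \<gamma> t \<and> ut t \<in> subdiff (g t) xbar"
      "u \<in> subdiff f xbar" "-(cbar+u) = (\<Sum>t\<in>T0. \<gamma> t *\<^sub>R ut t)"
    using kkt[OF T(1) f_convex g_convex g_cont bbar_cont gph slater] by blast
  define K where "K = (1 + sum \<gamma> T0) * (1 + (\<Sum>s\<in>T0. 1 / \<gamma> s))"
  have K1: "K \<ge> 1"
  proof -
    have "0 \<le> sum \<gamma> T0" using kk(3) by (intro sum_nonneg) (auto simp: less_imp_le)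
    moreover have "0 \<le> (\<Sum>s\<in>T0. 1 / \<gamma> s)" using kk(3) by (intro sum_nonneg) (auto simp: less_imp_le)
    ultimately have "1 * 1 \<le> (1 + sum \<gamma> T0) * (1 + (\<Sum>s\<in>T0. 1 / \<gamma> s))"
      by (intro mult_mono) auto
    then show ?thesis unfolding K_def by simp
  qed
  have lag: "bbar t - g t (X k) \<le> K * \<rho> k" if t: "t \<in> T0" for t k
  proof -
    let ?x = "X k"
    have Dl: "\<forall>s\<in>T0. - \<rho> k \<le> bbar s - g s ?x"
    proof
      fix s assume s: "s \<in> T0"
      then have sT: "s \<in> T" using kk(2) by blast
      have a1: "g s ?x \<le> bk k s" using Xf[of k] sT by blast
      have a2: "\<bar>bk k s - bbar s\<bar> \<le> \<rho> k" using \<rho>b[of k] sT by blast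
      show "- \<rho> k \<le> bbar s - g s ?x" using a1 a2 by (simp add: abs_le_iff)
    qed
    have sg: "\<gamma> s * inner (ut s) (?x - xbar) \<le> \<gamma> s * (g s ?x - bbar s)" if s: "s \<in> T0" for s
    proof -
      have "g s xbar + inner (ut s) (?x - xbar) \<le> g s ?x" using kk(3) s unfolding subdiff_def by blast
      then show ?thesis using kk(3) s by (intro mult_left_mono) auto
    qed
    have fu: "f xbar + inner u (?x - xbar) \<le> f ?x" using kk(4) unfolding subdiff_def by blast
    have "inner (cbar + u) (?x - xbar) = - (\<Sum>s\<in>T0. \<gamma> s * inner (ut s) (?x - xbar))"
    proof -
      have "inner (cbar + u) (?x - xbar) = - inner (-(cbar + u)) (?x - xbar)" by (simp only: inner_minus_left minus_minus)
      also have "\<dots> = - (\<Sum>s\<in>T0. \<gamma> s * inner (ut s) (?x - xbar))"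
        unfolding kk(5) by (simp add: inner_sum_left)
      finally show ?thesis .
    qed
    moreover have "(\<Sum>s\<in>T0. \<gamma> s * inner (ut s) (?x - xbar)) \<le> (\<Sum>s\<in>T0. \<gamma> s * (g s ?x - bbar s))"
      by (rule sum_mono) (rule sg)
    moreover have "(\<Sum>s\<in>T0. \<gamma> s * (g s ?x - bbar s)) = - (\<Sum>s\<in>T0. \<gamma> s * (bbar s - g s ?x))"
      by (simp add: sum_negf[symmetric] algebra_simps)
    moreover have "inner (cbar + u) (?x - xbar) = inner cbar ?x - inner cbar xbar + inner u (?x - xbar)"
      by (simp add: inner_add_left inner_diff_right)
    ultimately have "(\<Sum>s\<in>T0. \<gamma> s * (bbar s - g s ?x)) \<le> f ?x + inner cbar ?x - abar"
      using fu unfolding abar_def by linarith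
    also have "\<dots> \<le> ak k - abar" using Xl[of k] by simp
    also have "\<dots> \<le> \<rho> k" using \<rho>a[of k] by simp
    finally have S: "(\<Sum>s\<in>T0. \<gamma> s * (bbar s - g s ?x)) \<le> \<rho> k" .
    have gp: "\<forall>s\<in>T0. 0 < \<gamma> s" using kk(3) by blast
    show ?thesis using lag_alg[OF kk(1) t gp Dl S \<rho>0[of k]] unfolding K_def by simp
  qed
  define br where "br k t = max (g t (X k)) (bbar t - K * \<rho> k)" for k t
  have brc: "continuous_on T (br k)" for k
    unfolding br_def[abs_def]
    by (intro continuous_on_max g_slice_cont[OF g_cont] continuous_on_diff bbar_cont continuous_on_const)
  have brf: "X k \<in> feas T g (br k)" for k unfolding feas_def br_def by simp
  have bra: "T0 \<subseteq> active T g (br k) (X k)" for k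
  proof
    fix t assume t: "t \<in> T0"
    have "bbar t - g t (X k) \<le> K * \<rho> k" using lag[OF t] .
    then have "br k t = g t (X k)" unfolding br_def by simp
    then show "t \<in> active T g (br k) (X k)" unfolding active_def using t kk(2) by auto
  qed
  have brd: "supdist T (br k) bbar \<le> K * \<rho> k" for k
  proof (rule supdist_le)
    show "0 \<le> K * \<rho> k" using K1 \<rho>0[of k] by simp
    show "\<forall>t\<in>T. \<bar>br k t - bbar t\<bar> \<le> K * \<rho> k"
    proof
      fix t assume t: "t \<in> T"
      have a1: "g t (X k) \<le> bk k t" using Xf[of k] t by blast
      have a2: "\<bar>bk k t - bbar t\<bar> \<le> \<rho> k" using \<rho>b[of k] t by blast
      have a3: "\<rho> k \<le> K * \<rho> k" using K1 \<rho>0[of k] by (simp add: mult_le_cancel_right1)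
      have lo: "bbar t - K * \<rho> k \<le> br k t" unfolding br_def by simp
      have hi: "br k t \<le> bbar t + K * \<rho> k" unfolding br_def using a1 a2 a3 \<rho>0[of k] K1
        by (simp add: abs_le_iff)
      show "\<bar>br k t - bbar t\<bar> \<le> K * \<rho> k" using lo hi by (simp add: abs_le_iff)
    qed
  qed
  have brn: "0 \<le> supdist T (br k) bbar" for k by (rule supdist_nonneg[OF T(1) brc bbar_cont])
  have invl: "inv \<longlonglongrightarrow> 0" unfolding inv_def[abs_def] by (rule LIMSEQ_inverse_real_of_nat)
  have Xlim: "X \<longlonglongrightarrow> xbar"
  proof (rule tendsto_dist_iff[THEN iffD2], rule real_tendsto_sandwich[OF _ _ tendsto_const invl])
    show "\<forall>\<^sub>F k in sequentially. 0 \<le> dist (X k) xbar" by simp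
    show "\<forall>\<^sub>F k in sequentially. dist (X k) xbar \<le> inv k"
      by (rule always_eventually, rule allI, rule less_imp_le, rule Xd)
  qed
  have Klim: "(\<lambda>k. K * inv k) \<longlonglongrightarrow> 0"
    using tendsto_mult[OF tendsto_const[of K] invl] by simp
  have brlim: "(\<lambda>k. supdist T (br k) bbar) \<longlonglongrightarrow> 0"
  proof (rule real_tendsto_sandwich[OF _ _ tendsto_const Klim])
    show "\<forall>\<^sub>F k in sequentially. 0 \<le> supdist T (br k) bbar" using brn by simp
    show "\<forall>\<^sub>F k in sequentially. supdist T (br k) bbar \<le> K * inv k"
    proof (rule always_eventually, rule allI)
      fix k
      have "K * \<rho> k \<le> K * inv k" using \<rho>i[of k] K1 by (intro mult_left_mono) auto
      then show "supdist T (br k) bbar \<le> K * inv k" using brd[of k] by linarith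
    qed
  qed
  have idp: "0 < infdist (X k) Sol" for k
  proof -
    have "0 \<le> \<rho> k powr q" by simp
    then have "0 < inv k * infdist (X k) Sol" using Xq[of k] by linarith
    then show ?thesis using inv0[of k] by (simp add: zero_less_mult_iff)
  qed
  have Kq: "(\<lambda>k. K powr q * inv k) \<longlonglongrightarrow> 0"
    using tendsto_mult[OF tendsto_const[of "K powr q"] invl] by simp
  have ratio: "(\<lambda>k. supdist T (br k) bbar powr q / infdist (X k) Sol) \<longlonglongrightarrow> 0"
  proof (rule real_tendsto_sandwich[OF _ _ tendsto_const Kq])
    show "\<forall>\<^sub>F k in sequentially. 0 \<le> supdist T (br k) bbar powr q / infdist (X k) Sol"
      using idp by (simp add: less_imp_le)
    show "\<forall>\<^sub>F k in sequentially. supdist T (br k) bbar powr q / infdist (X k) Sol \<le> K powr q * inv k"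
    proof (rule always_eventually, rule allI)
      fix k
      have d: "0 < infdist (X k) Sol" by (rule idp)
      have "supdist T (br k) bbar powr q \<le> (K * \<rho> k) powr q"
        using brn[of k] brd[of k] q by (intro powr_mono2) auto
      also have "\<dots> = K powr q * \<rho> k powr q" using K1 \<rho>0[of k] by (simp add: powr_mult)
      also have "\<dots> \<le> K powr q * (inv k * infdist (X k) Sol)"
        using Xq[of k] by (intro mult_left_mono) auto
      finally have "supdist T (br k) bbar powr q \<le> K powr q * inv k * infdist (X k) Sol"
        by (simp add: mult.assoc)
      then show "supdist T (br k) bbar powr q / infdist (X k) Sol \<le> K powr q * inv k"
        using d by (simp add: divide_le_eq)
    qed
  qed
  show ?thesis
  proof (intro exI conjI)
    show "\<forall>r. continuous_on T (br r)" using brc by blast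
    show "X \<longlonglongrightarrow> xbar" by (rule Xlim)
    show "(\<lambda>r. supdist T (br r) bbar) \<longlonglongrightarrow> 0" by (rule brlim)
    show "\<forall>r. X r \<in> feas T g (br r)" using brf by blast
    show "\<forall>r. 0 < infdist (X r) (solset f T g cbar bbar)" using idp unfolding Sol_def by blast
    show "(\<lambda>r. supdist T (br r) bbar powr q / infdist (X r) (solset f T g cbar bbar)) \<longlonglongrightarrow> 0"
      using ratio unfolding Sol_def .
    show "finite T0" by (rule kk(1))
    show "T0 \<subseteq> T" by (rule kk(2))
    show "\<forall>r. T0 \<subseteq> active T g (br r) (X r)" using bra by blast
    show "\<forall>t\<in>T0. 0 < \<gamma> t \<and> ut t \<in> subdiff (g t) xbar" using kk(3) by blast
    show "u \<in> subdiff f xbar" by (rule kk(4))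
    show "-(cbar + u) = (\<Sum>t\<in>T0. \<gamma> t *\<^sub>R ut t)" by (rule kk(5))
  qed
qed

end
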